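(* Let $p,q \geq 1$ with $p+q \geq 3$, and let $M_x, M_y, M_z$ be three Minkowski patches in $\mathrm{Ein}^{p,q}$. If $M_x \cap M_z = M_y \cap M_z$, then $M_x = M_y$.
   Context: Let $\mathbb{R}^{p+1,q+1}$ be $\mathbb{R}^{p+q+2}$ with a nondegenerate symmetric bilinear form $B$ of signature $(p+1,q+1)$, and $\mathrm{Ein}^{p,q} \subset \mathbb{R}P^{p+q+1}$ the set of isotropic lines, with the conformal structure induced by $B$. For an isotropic vector $v$ with $x=[v]$, the Minkowski patch with vertex $x$ is $M_x = \{[w] \in \mathrm{Ein}^{p,q} : B(v,w) \neq 0\}$; it is an open dense subset conformally equivalent to $\mathbb{R}^{p,q}$. *)

theory Defs
  imports Complex_Main
begin

text \<open>Vectors of R^(p+q+2) are modelled as functions nat => real vanishing at indices >= p+q+2.\<close>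

definition vecs :: "nat \<Rightarrow> nat \<Rightarrow> (nat \<Rightarrow> real) set" where
  "vecs p q = {v. \<forall>i\<ge>p+q+2. v i = 0}"

definition Bf :: "nat \<Rightarrow> nat \<Rightarrow> (nat \<Rightarrow> real) \<Rightarrow> (nat \<Rightarrow> real) \<Rightarrow> real" where
  "Bf p q v w = (\<Sum>i<p+1. v i * w i) - (\<Sum>i\<in>{p+1..<p+q+2}. v i * w i)"

definition line :: "(nat \<Rightarrow> real) \<Rightarrow> (nat \<Rightarrow> real) set" where
  "line v = {(\<lambda>i. c * v i) | c. True}"

definition Ein :: "nat \<Rightarrow> nat \<Rightarrow> (nat \<Rightarrow> real) set set" where
  "Ein p q = {line v | v. v \<in> vecs p q \<and> v \<noteq> (\<lambda>_. 0) \<and> Bf p q v v = 0}"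

definition Mink :: "nat \<Rightarrow> nat \<Rightarrow> (nat \<Rightarrow> real) set \<Rightarrow> (nat \<Rightarrow> real) set set" where
  "Mink p q x = {L \<in> Ein p q. \<exists>v w. v \<in> vecs p q \<and> w \<in> vecs p q \<and> v \<noteq> (\<lambda>_. 0) \<and> w \<noteq> (\<lambda>_. 0)
      \<and> x = line v \<and> L = line w \<and> Bf p q v w \<noteq> 0}"

end

theory Submission
  imports Defs
begin

lemma Bf_sym: "Bf p q v w = Bf p q w v"
  unfolding Bf_def by (simp add: mult.commute)
lemma Bf_add1[simp]: "Bf p q (\<lambda>i. u i + v i) w = Bf p q u w + Bf p q v w"
  unfolding Bf_def by (simp add: sum.distrib algebra_simps)
lemma Bf_diff1[simp]: "Bf p q (\<lambda>i. u i - v i) w = Bf p q u w - Bf p q v w"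
  unfolding Bf_def by (simp add: sum_subtractf algebra_simps)
lemma Bf_scale1[simp]: "Bf p q (\<lambda>i. k * u i) w = k * Bf p q u w"
  unfolding Bf_def by (simp add: sum_distrib_left algebra_simps)
lemma Bf_add2[simp]: "Bf p q w (\<lambda>i. u i + v i) = Bf p q w u + Bf p q w v"
  by (metis Bf_sym Bf_add1)
lemma Bf_diff2[simp]: "Bf p q w (\<lambda>i. u i - v i) = Bf p q w u - Bf p q w v"
  by (metis Bf_sym Bf_diff1)
lemma Bf_scale2[simp]: "Bf p q w (\<lambda>i. k * u i) = k * Bf p q w u"
  by (metis Bf_sym Bf_scale1)

definition ev :: "nat \<Rightarrow> nat \<Rightarrow> real" where "ev i = (\<lambda>j. if j = i then 1 else 0)"

lemma sum_ev: "finite A \<Longrightarrow> (\<Sum>k\<in>A. v k * ev i k) = (if i \<in> A then v i else 0)"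
proof -
  assume A: "finite A"
  have "(\<Sum>k\<in>A. v k * ev i k) = (\<Sum>k\<in>A. if k = i then v k else 0)"
    by (rule sum.cong) (auto simp: ev_def)
  also have "\<dots> = (if i \<in> A then v i else 0)" using A by (simp add: sum.delta)
  finally show ?thesis .
qed

lemma Bf_ev: "Bf p q v (ev i) = (if i < p+1 then v i else if i < p+q+2 then - v i else 0)"
  unfolding Bf_def sum_ev[OF finite_lessThan] sum_ev[OF finite_atLeastLessThan] by simp

lemma ev_vecs: "i < p+q+2 \<Longrightarrow> ev i \<in> vecs p q"
  unfolding vecs_def ev_def by auto

lemma nondeg:
  assumes "v \<in> vecs p q" "\<And>w. w \<in> vecs p q \<Longrightarrow> Bf p q v w = 0"
  shows "v = (\<lambda>_. 0)"
proof
  fix i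
  show "v i = 0"
  proof (cases "i < p+q+2")
    case True
    then have "Bf p q v (ev i) = 0" using assms(2) ev_vecs by blast
    then show ?thesis using True by (simp add: Bf_ev split: if_splits)
  next
    case False then show ?thesis using assms(1) unfolding vecs_def by auto
  qed
qed


lemma ker_lemma:
  assumes a: "a \<in> vecs p q" "a \<noteq> (\<lambda>_. 0)" and b: "b \<in> vecs p q"
    and h: "\<And>w. w \<in> vecs p q \<Longrightarrow> Bf p q a w = 0 \<Longrightarrow> Bf p q b w = 0"
  shows "\<exists>k. b = (\<lambda>i. k * a i)"
proof -
  obtain w0 where w0: "w0 \<in> vecs p q" "Bf p q a w0 \<noteq> 0"
    using nondeg[OF a(1)] a(2) by blast
  define w1 where "w1 = (\<lambda>i. (1 / Bf p q a w0) * w0 i)"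
  have w1v: "w1 \<in> vecs p q" using w0(1) unfolding w1_def vecs_def by auto
  have w1a: "Bf p q a w1 = 1" using w0(2) unfolding w1_def by (simp only: Bf_scale2) simp
  define k where "k = Bf p q b w1"
  have e: "(\<lambda>i. b i - k * a i) = (\<lambda>_. 0)"
  proof (rule nondeg)
    show "(\<lambda>i. b i - k * a i) \<in> vecs p q" using a b unfolding vecs_def by auto
    fix w assume wv: "w \<in> vecs p q"
    define w' where "w' = (\<lambda>i. w i - Bf p q a w * w1 i)"
    have "w' \<in> vecs p q" using wv w1v unfolding w'_def vecs_def by auto
    moreover have "Bf p q a w' = 0" unfolding w'_def using w1a by simp
    ultimately have "Bf p q b w' = 0" using h by blast
    then have "Bf p q b w = Bf p q a w * k" unfolding w'_def k_def by simp
    then show "Bf p q (\<lambda>i. b i - k * a i) w = 0" by (simp add: algebra_simps)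
  qed
  have "b = (\<lambda>i. k * a i)"
  proof
    fix i show "b i = k * a i" using fun_cong[OF e, of i] by simp
  qed
  then show ?thesis by blast
qed

lemma in_line_self: "v \<in> line v"
  unfolding line_def by (rule CollectI, rule exI[of _ 1], simp)

lemma in_line: "u \<in> line v \<Longrightarrow> \<exists>k. u = (\<lambda>i. k * v i)"
  unfolding line_def by auto

lemma line_eq:
  assumes "b = (\<lambda>i. k * a i)" "b \<noteq> (\<lambda>_. 0)"
  shows "line a = line b"
proof -
  have k: "k \<noteq> 0" using assms by auto
  show ?thesis
  proof
    show "line a \<subseteq> line b"
    proof
      fix u assume "u \<in> line a"
      then obtain c where "u = (\<lambda>i. c * a i)" unfolding line_def by auto
      then have "u = (\<lambda>i. (c / k) * b i)" using assms(1) k by auto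
      then show "u \<in> line b" unfolding line_def by blast
    qed
    show "line b \<subseteq> line a"
    proof
      fix u assume "u \<in> line b"
      then obtain c where "u = (\<lambda>i. c * b i)" unfolding line_def by auto
      then have "u = (\<lambda>i. (c * k) * a i)" using assms(1) by auto
      then show "u \<in> line a" unfolding line_def by blast
    qed
  qed
qed

lemma Mink_iff:
  assumes "x = line a" "a \<in> vecs p q" "a \<noteq> (\<lambda>_. 0)"
    and v: "v \<in> vecs p q" "v \<noteq> (\<lambda>_. 0)" "Bf p q v v = 0"
  shows "line v \<in> Mink p q x \<longleftrightarrow> Bf p q a v \<noteq> 0"
proof
  assume "line v \<in> Mink p q x"
  then obtain v' w' where h: "x = line v'" "line v = line w'" "Bf p q v' w' \<noteq> 0"
    unfolding Mink_def by blast
  have "v' \<in> line a" using h(1) assms(1) in_line_self by metis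
  then obtain k where k: "v' = (\<lambda>i. k * a i)" using in_line by blast
  have "w' \<in> line v" using h(2) in_line_self by metis
  then obtain m where m: "w' = (\<lambda>i. m * v i)" using in_line by blast
  show "Bf p q a v \<noteq> 0" using h(3) k m by simp
next
  assume "Bf p q a v \<noteq> 0"
  moreover have "line v \<in> Ein p q" unfolding Ein_def using v by blast
  ultimately show "line v \<in> Mink p q x" unfolding Mink_def using assms by blast
qed


lemma two_roots:
  fixes A B C :: real
  assumes "A * C < 0"
  obtains t1 t2 where "t1 \<noteq> t2" "C + 2 * t1 * B + t1^2 * A = 0" "C + 2 * t2 * B + t2^2 * A = 0"
proof -
  define D where "D = B^2 - A * C"
  have D: "D > 0" using assms unfolding D_def by (smt (verit) zero_le_power2)
  define s where "s = sqrt D"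
  have s: "s > 0" "s^2 = D" using D unfolding s_def by auto
  have A: "A \<noteq> 0" using assms by auto
  define t1 where "t1 = (- B + s) / A"
  define t2 where "t2 = (- B - s) / A"
  have "t1 \<noteq> t2" using s A unfolding t1_def t2_def by (auto simp: field_simps)
  moreover have "C + 2 * t1 * B + t1^2 * A = 0"
  proof -
    have "A * (C + 2 * t1 * B + t1^2 * A) = A*C + 2*B*(-B+s) + (-B+s)^2"
      unfolding t1_def using A by (simp add: field_simps power2_eq_square)
    also have "\<dots> = 0" using s(2) unfolding D_def by (simp add: power2_eq_square algebra_simps)
    finally show ?thesis using A by simp
  qed
  moreover have "C + 2 * t2 * B + t2^2 * A = 0"
  proof -
    have "A * (C + 2 * t2 * B + t2^2 * A) = A*C + 2*B*(-B-s) + (-B-s)^2"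
      unfolding t2_def using A by (simp add: field_simps power2_eq_square)
    also have "\<dots> = 0" using s(2) unfolding D_def by (simp add: power2_eq_square algebra_simps)
    finally show ?thesis using A by simp
  qed
  ultimately show ?thesis using that by blast
qed

lemma ev_ev: "ev i j = (if j = i then 1 else 0)" unfolding ev_def by simp

lemma exists_g:
  assumes "i \<noteq> j" "i < p+q+2" "j < p+q+2" "(i < p+1) = (j < p+1)"
  shows "\<exists>g\<in>vecs p q. Bf p q a g = 0 \<and> (if i < p+1 then Bf p q g g > 0 else Bf p q g g < 0)"
proof (cases "Bf p q a (ev j) = 0 \<and> Bf p q a (ev i) = 0")
  case True
  then show ?thesis using assms by (intro bexI[of _ "ev i"]) (auto simp: Bf_ev ev_ev ev_vecs)
next
  case False
  define \<alpha> where "\<alpha> = Bf p q a (ev j)"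
  define \<gamma> where "\<gamma> = - Bf p q a (ev i)"
  define g where "g = (\<lambda>k. \<alpha> * ev i k + \<gamma> * ev j k)"
  have gv: "g \<in> vecs p q" using ev_vecs[OF assms(2)] ev_vecs[OF assms(3)]
    unfolding g_def vecs_def by auto
  have "Bf p q a g = 0" unfolding g_def \<alpha>_def \<gamma>_def by simp
  moreover have "Bf p q g g = (if i < p+1 then 1 else -1) * (\<alpha>^2 + \<gamma>^2)"
  proof -
    have e1: "Bf p q (ev i) (ev i) = (if i < p+1 then 1 else -1)" using assms by (simp add: Bf_ev ev_ev)
    have e2: "Bf p q (ev j) (ev j) = (if i < p+1 then 1 else -1)" using assms by (simp add: Bf_ev ev_ev)
    have e3: "Bf p q (ev i) (ev j) = 0" using assms by (simp add: Bf_ev ev_ev)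
    have e4: "Bf p q (ev j) (ev i) = 0" using assms by (simp add: Bf_ev ev_ev)
    show ?thesis unfolding g_def by (simp add: e1 e2 e3 e4 power2_eq_square algebra_simps)
  qed
  moreover have "\<alpha>^2 + \<gamma>^2 > 0" using False unfolding \<alpha>_def \<gamma>_def
    by (metis add_pos_nonneg add_nonneg_pos neg_0_equal_iff_equal not_real_square_gt_zero zero_le_power2 power2_eq_square)
  ultimately show ?thesis using gv by (intro bexI[of _ g]) auto
qed


lemma case_beta:
  assumes pq: "p \<ge> 1" "q \<ge> 1"
    and v: "a \<in> vecs p q" "b \<in> vecs p q" "c \<in> vecs p q"
    and aa: "Bf p q a a = 0" and ac: "Bf p q a c \<noteq> 0"
    and H: "\<And>v. v \<in> vecs p q \<Longrightarrow> Bf p q v v = 0 \<Longrightarrow> Bf p q c v \<noteq> 0 \<Longrightarrow>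
              (Bf p q a v = 0 \<longleftrightarrow> Bf p q b v = 0)"
  shows "\<And>w. w \<in> vecs p q \<Longrightarrow> Bf p q a w = 0 \<Longrightarrow> Bf p q b w = 0"
proof -
  have ca: "Bf p q c a \<noteq> 0" using ac Bf_sym by metis
  have ba: "Bf p q b a = 0" using H[OF v(1) aa ca] aa by simp
  have null: "Bf p q b v = 0" if vv: "v \<in> vecs p q" "Bf p q a v = 0" "Bf p q v v = 0" for v
  proof -
    define s where "s = (1 - Bf p q c v) / Bf p q c a"
    define v' where "v' = (\<lambda>i. v i + s * a i)"
    have v'v: "v' \<in> vecs p q" using vv v unfolding v'_def vecs_def by auto
    have "Bf p q v' v' = 0" unfolding v'_def using vv aa Bf_sym[of p q v a] by simp
    moreover have "Bf p q c v' = 1"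
    proof -
      have "Bf p q c v' = Bf p q c v + s * Bf p q c a" unfolding v'_def by (simp only: Bf_add2 Bf_scale2)
      then show ?thesis using ca by (simp add: s_def)
    qed
    moreover have "Bf p q a v' = 0" unfolding v'_def using vv aa by simp
    ultimately have "Bf p q b v' = 0" using H[OF v'v] by simp
    then show ?thesis unfolding v'_def using ba by simp
  qed
  fix w assume wv: "w \<in> vecs p q" and aw: "Bf p q a w = 0"
  show "Bf p q b w = 0"
  proof (cases "Bf p q w w = 0")
    case True then show ?thesis using null wv aw by blast
  next
    case False
    have "\<exists>g\<in>vecs p q. Bf p q a g = 0 \<and> Bf p q g g * Bf p q w w < 0"
    proof (cases "Bf p q w w > 0")
      case True
      obtain g where "g \<in> vecs p q" "Bf p q a g = 0" "Bf p q g g < 0"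
        using exists_g[of "p+1" "p+2" p q a] pq by auto
      then show ?thesis using True by (intro bexI[of _ g]) (auto simp: mult_neg_pos)
    next
      case F2: False
      then have "Bf p q w w < 0" using False by auto
      moreover obtain g where "g \<in> vecs p q" "Bf p q a g = 0" "Bf p q g g > 0"
        using exists_g[of 0 1 p q a] pq by auto
      ultimately show ?thesis by (intro bexI[of _ g]) (auto simp: mult_pos_neg)
    qed
    then obtain g where g: "g \<in> vecs p q" "Bf p q a g = 0" "Bf p q g g * Bf p q w w < 0" by blast
    obtain t1 t2 where t: "t1 \<noteq> t2"
      "Bf p q w w + 2 * t1 * Bf p q w g + t1^2 * Bf p q g g = 0"
      "Bf p q w w + 2 * t2 * Bf p q w g + t2^2 * Bf p q g g = 0"
      using two_roots[OF g(3)] by blast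
    have r: "Bf p q b w + t * Bf p q b g = 0"
      if "Bf p q w w + 2 * t * Bf p q w g + t^2 * Bf p q g g = 0" for t
    proof -
      define u where "u = (\<lambda>i. w i + t * g i)"
      have "u \<in> vecs p q" using wv g unfolding u_def vecs_def by auto
      moreover have "Bf p q a u = 0" unfolding u_def using aw g by simp
      moreover have "Bf p q u u = 0" unfolding u_def using that Bf_sym[of p q g w]
        by (simp add: power2_eq_square algebra_simps)
      ultimately have "Bf p q b u = 0" using null by blast
      then show ?thesis unfolding u_def by simp
    qed
    have "Bf p q b w + t1 * Bf p q b g = 0" "Bf p q b w + t2 * Bf p q b g = 0"
      using r t by auto
    then have "(t1 - t2) * Bf p q b g = 0"
      by (metis (no_types, opaque_lifting) add_diff_cancel_left diff_self left_diff_distrib add_diff_add)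
    then have "Bf p q b g = 0" using t(1) by simp
    then show ?thesis using \<open>Bf p q b w + t1 * Bf p q b g = 0\<close> by simp
  qed
qed


lemma case_zero:
  assumes v: "a \<in> vecs p q" "b \<in> vecs p q" "c \<in> vecs p q"
    and nz: "a \<noteq> (\<lambda>_. 0)" "b \<noteq> (\<lambda>_. 0)" "c \<noteq> (\<lambda>_. 0)"
    and cc: "Bf p q c c = 0" and ac: "Bf p q a c = 0" and bc: "Bf p q b c = 0"
    and H: "\<And>v. v \<in> vecs p q \<Longrightarrow> Bf p q v v = 0 \<Longrightarrow> Bf p q c v \<noteq> 0 \<Longrightarrow>
              (Bf p q a v = 0 \<longleftrightarrow> Bf p q b v = 0)"
  shows "(\<exists>k. b = (\<lambda>i. k * a i)) \<or> (\<exists>k. a = (\<lambda>i. k * b i))"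
proof -
  have H2: "Bf p q a u = 0 \<longleftrightarrow> Bf p q b u = 0" if u: "u \<in> vecs p q" "Bf p q c u \<noteq> 0" for u
  proof -
    define L where "L = Bf p q c u"
    define w where "w = (\<lambda>i. (2 * L) * u i - Bf p q u u * c i)"
    have wv: "w \<in> vecs p q" using u v unfolding w_def vecs_def by auto
    have "Bf p q w w = 0" unfolding w_def L_def
      by (simp only: Bf_diff1 Bf_diff2 Bf_scale1 Bf_scale2) (simp add: cc Bf_sym[of p q u c] algebra_simps)
    moreover have cw: "Bf p q c w = 2 * L * L" unfolding w_def L_def using cc by simp
    moreover have "Bf p q a w = 2 * L * Bf p q a u" unfolding w_def using ac by simp
    moreover have "Bf p q b w = 2 * L * Bf p q b u" unfolding w_def using bc by simp
    moreover have "L \<noteq> 0" using u L_def by simp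
    ultimately show ?thesis using H[OF wv] by simp
  qed
  show ?thesis
  proof (cases "\<exists>h\<in>vecs p q. Bf p q a h = 0 \<and> Bf p q c h \<noteq> 0")
    case True
    then obtain h where h: "h \<in> vecs p q" "Bf p q a h = 0" "Bf p q c h \<noteq> 0" by blast
    have "Bf p q b w = 0" if w: "w \<in> vecs p q" "Bf p q a w = 0" for w
    proof -
      define s0 where "s0 = - Bf p q c w / Bf p q c h"
      have r: "Bf p q b w + s * Bf p q b h = 0" if "s \<noteq> s0" for s
      proof -
        define u where "u = (\<lambda>i. w i + s * h i)"
        have uv: "u \<in> vecs p q" using w h unfolding u_def vecs_def by auto
        have "Bf p q c u = Bf p q c w + s * Bf p q c h" unfolding u_def by (simp only: Bf_add2 Bf_scale2)
        also have "\<dots> \<noteq> 0" using that h(3) unfolding s0_def by (auto simp: field_simps)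
        finally have "Bf p q c u \<noteq> 0" .
        moreover have "Bf p q a u = 0" unfolding u_def using w h by simp
        ultimately have "Bf p q b u = 0" using H2 uv by blast
        then show ?thesis unfolding u_def by simp
      qed
      have "Bf p q b w + (s0+1) * Bf p q b h = 0" "Bf p q b w + (s0+2) * Bf p q b h = 0"
        using r by auto
      moreover have "Bf p q b h = (Bf p q b w + (s0+2) * Bf p q b h) - (Bf p q b w + (s0+1) * Bf p q b h)"
        by (simp add: algebra_simps)
      ultimately have "Bf p q b h = 0" by simp
      then show ?thesis using \<open>Bf p q b w + (s0+1) * Bf p q b h = 0\<close> by simp
    qed
    then have "\<exists>k. b = (\<lambda>i. k * a i)" using ker_lemma[OF v(1) nz(1) v(2)] by blast
    then show ?thesis by blast
  next
    case False
    then have "\<exists>k. c = (\<lambda>i. k * a i)" using ker_lemma[OF v(1) nz(1) v(3)] by blast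
    then obtain k where k: "c = (\<lambda>i. k * a i)" by blast
    have "Bf p q c u = 0" if "u \<in> vecs p q" "Bf p q b u = 0" for u
      using False H2 that by blast
    then have "\<exists>m. c = (\<lambda>i. m * b i)" using ker_lemma[OF v(2) nz(2) v(3)] by blast
    then obtain m where m: "c = (\<lambda>i. m * b i)" by blast
    have k0: "k \<noteq> 0" using k nz(3) by auto
    have "a = (\<lambda>i. (m / k) * b i)"
    proof
      fix i
      have "k * a i = m * b i" using k m by metis
      then show "a i = (m / k) * b i" using k0 by (simp add: field_simps)
    qed
    then show ?thesis by blast
  qed
qed

theorem lemma2p3:
  fixes p q :: nat and x y z :: "(nat \<Rightarrow> real) set"
  assumes "p \<ge> 1" and "q \<ge> 1" and "p + q \<ge> 3"
    and "x \<in> Ein p q" and "y \<in> Ein p q" and "z \<in> Ein p q"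
    and "Mink p q x \<inter> Mink p q z = Mink p q y \<inter> Mink p q z"
  shows "Mink p q x = Mink p q y"
proof -
  obtain a where a: "x = line a" "a \<in> vecs p q" "a \<noteq> (\<lambda>_. 0)" "Bf p q a a = 0"
    using assms(4) unfolding Ein_def by blast
  obtain b where b: "y = line b" "b \<in> vecs p q" "b \<noteq> (\<lambda>_. 0)" "Bf p q b b = 0"
    using assms(5) unfolding Ein_def by blast
  obtain c where c: "z = line c" "c \<in> vecs p q" "c \<noteq> (\<lambda>_. 0)" "Bf p q c c = 0"
    using assms(6) unfolding Ein_def by blast
  have H: "Bf p q a v = 0 \<longleftrightarrow> Bf p q b v = 0"
    if v: "v \<in> vecs p q" "Bf p q v v = 0" "Bf p q c v \<noteq> 0" for v
  proof -
    have "Bf p q c (\<lambda>_. 0) = 0" unfolding Bf_def by simp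
    then have v0: "v \<noteq> (\<lambda>_. 0)" using v(3) by auto
    have "line v \<in> Mink p q z" using Mink_iff[OF c(1-3) v(1) v0 v(2)] v(3) by simp
    then have "line v \<in> Mink p q x \<longleftrightarrow> line v \<in> Mink p q y" using assms(7) by blast
    then show ?thesis using Mink_iff[OF a(1-3) v(1) v0 v(2)] Mink_iff[OF b(1-3) v(1) v0 v(2)] by simp
  qed
  have "line a = line b"
  proof (cases "Bf p q a c \<noteq> 0")
    case True
    have "\<exists>k. b = (\<lambda>i. k * a i)"
      using ker_lemma[OF a(2) a(3) b(2)] case_beta[OF assms(1,2) a(2) b(2) c(2) a(4) True H] by blast
    then show ?thesis using line_eq b(3) by blast
  next
    case F1: False
    show ?thesis
    proof (cases "Bf p q b c \<noteq> 0")
      case True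
      have H': "Bf p q b v = 0 \<longleftrightarrow> Bf p q a v = 0"
        if "v \<in> vecs p q" "Bf p q v v = 0" "Bf p q c v \<noteq> 0" for v
        using H[OF that] by blast
      have "\<exists>k. a = (\<lambda>i. k * b i)"
        using ker_lemma[OF b(2) b(3) a(2)] case_beta[OF assms(1,2) b(2) a(2) c(2) b(4) True H'] by blast
      then show ?thesis using line_eq a(3) by metis
    next
      case False
      then have "(\<exists>k. b = (\<lambda>i. k * a i)) \<or> (\<exists>k. a = (\<lambda>i. k * b i))"
        using case_zero[OF a(2) b(2) c(2) a(3) b(3) c(3) c(4) _ _ H] F1 by blast
      then show ?thesis using line_eq a(3) b(3) by metis
    qed
  qed
  then show ?thesis using a(1) b(1) by simp
qed

end
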